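(* Let $\mathfrak l$ be a real finite-dimensional nilpotent admissible Lie algebra with $\dim\mathfrak l'=2$ and $\mathfrak l'\subset\mathfrak z(\mathfrak l)$, having a basis $X_1,\dots,X_n,Y,Z$ ($n\ge4$) with $[X_1,X_2]=Y$, $[X_1,X_3]=Z$, $[X_2,X_3]=0$, $[X_1,X_4]=0$, $[X_2,X_4]=Z$, and $[X_1,X_j]=[X_2,X_j]=0$ for $j\ge5$. Then $[X_3,X_j]=0$ for all $j\ge5$.
   Context: For a Lie algebra $\mathfrak l$: $\mathfrak l^1=\mathfrak l$, $\mathfrak l^{k+1}=[\mathfrak l,\mathfrak l^k]$, $\mathfrak l'=\mathfrak l^2$, $\mathfrak z(\mathfrak l)$ the centre. An orthogonal $\mathfrak l$-module $(\rho,\mathfrak a)$ is a finite-dimensional real vector space with a nondegenerate symmetric bilinear form $\langle\cdot,\cdot\rangle_{\mathfrak a}$ and a representation by skew-adjoint maps. $C^p(\mathfrak l,\mathfrak a)$: alternating $p$-linear maps with Chevalley–Eilenberg differential $d$; $C^p(\mathfrak l)=C^p(\mathfrak l,\mathbb R)$; $\langle\alpha\wedge\beta\rangle$ is the wedge product followed by contraction with $\langle\cdot,\cdot\rangle_{\mathfrak a}$. $\mathcal Z^2_Q(\mathfrak l,\mathfrak a)=\{(\alpha,\gamma)\in C^2(\mathfrak l,\mathfrak a)\oplus C^3(\mathfrak l): d\alpha=0,d\gamma=\frac12\langle\alpha\wedge\alpha\rangle\}$; the group $C^1(\mathfrak l,\mathfrak a)\oplus C^2(\mathfrak l)$ with $(\tau_1,\sigma_1)*(\tau_2,\sigma_2)=(\tau_1+\tau_2,\sigma_1+\sigma_2+\frac12\langle\tau_1\wedge\tau_2\rangle)$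 acts by $(\alpha,\gamma)(\tau,\sigma)=(\alpha+d\tau,\gamma+d\sigma+\langle(\alpha+\frac12d\tau)\wedge\tau\rangle)$; $\mathcal H^2_Q(\mathfrak l,\mathfrak a)$ is the orbit set. Admissibility: for semisimple $(\rho,\mathfrak a)$, with $\mathfrak l^{m+2}=0$, $\mathfrak l_{(0)}=\mathfrak z(\mathfrak l)\cap\ker\rho$, $\mathfrak l_{(k)}=\mathfrak z(\mathfrak l)\cap\mathfrak l^{k+1}$ ($k\ge1$), and a representative with $\alpha(\mathfrak l,\mathfrak l)\subset\mathfrak a^{\mathfrak l}$, a class is admissible iff for all $0\le k\le m$: $(A_k)$ whenever $L_0\in\mathfrak l_{(k)}$ and there are $A_0\in\mathfrak a$, $Z_0\in(\mathfrak l^{k+1})^*$ with $\alpha(L,L_0)=0$ and $\gamma(L,L_0,\cdot)=-\langle A_0,\alpha(L,\cdot)\rangle_{\mathfrak a}+\langle Z_0,[L,\cdot]\rangle$ on $\mathfrak l^{k+1}$ for all $L$, then $L_0=0$; $(B_k)$ $\alpha$ applied to the kernel of the bracket map $\mathfrak l\otimes\mathfrak l^{k+1}\to\mathfrak l$ is a nondegenerate subspace of $\mathfrak a$. $\mathfrak l$ is admissible if some semisimple orthogonal module admits an admissible class. *)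

theory Defs
  imports "HOL-Analysis.Analysis"
begin

definition lie_algebra :: "('l::real_vector \<Rightarrow> 'l \<Rightarrow> 'l) \<Rightarrow> bool" where
  "lie_algebra br \<longleftrightarrow>
     (\<forall>x. linear (br x)) \<and> (\<forall>y. linear (\<lambda>x. br x y)) \<and>
     (\<forall>x. br x x = 0) \<and>
     (\<forall>x y z. br x (br y z) + br y (br z x) + br z (br x y) = 0)"

text \<open>Lower central series: lcs br k is l^k (k \<ge> 1); l^0 := l by convention.\<close>
fun lcs :: "('l::real_vector \<Rightarrow> 'l \<Rightarrow> 'l) \<Rightarrow> nat \<Rightarrow> 'l set" where
  "lcs br 0 = UNIV"
| "lcs br (Suc 0) = UNIV"
| "lcs br (Suc (Suc k)) = span {br x y | x y. y \<in> lcs br (Suc k)}"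

definition centre :: "('l::real_vector \<Rightarrow> 'l \<Rightarrow> 'l) \<Rightarrow> 'l set" where
  "centre br = {z. \<forall>x. br x z = 0}"

definition nilpotent_lie :: "('l::real_vector \<Rightarrow> 'l \<Rightarrow> 'l) \<Rightarrow> bool" where
  "nilpotent_lie br \<longleftrightarrow> (\<exists>k. lcs br k = {0})"

definition lin_on :: "'a::real_vector set \<Rightarrow> ('a \<Rightarrow> 'b::real_vector) \<Rightarrow> bool" where
  "lin_on S f \<longleftrightarrow> (\<forall>u\<in>S. \<forall>v\<in>S. f (u + v) = f u + f v) \<and> (\<forall>c. \<forall>u\<in>S. f (c *\<^sub>R u) = c *\<^sub>R f u)"

definition orth_module ::
  "('l::real_vector \<Rightarrow> 'l \<Rightarrow> 'l) \<Rightarrow> 'm::real_vector set \<Rightarrow> ('l \<Rightarrow> 'm \<Rightarrow> 'm) \<Rightarrow> ('m \<Rightarrow> 'm \<Rightarrow> real) \<Rightarrow> bool" where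
  "orth_module br A \<rho> B \<longleftrightarrow>
     subspace A \<and> (\<exists>S. finite S \<and> S \<subseteq> A \<and> span S = A) \<and>
     \<comment> \<open>nondegenerate symmetric bilinear form on A\<close>
     (\<forall>a\<in>A. lin_on A (B a)) \<and> (\<forall>a\<in>A. \<forall>b\<in>A. B a b = B b a) \<and>
     (\<forall>a\<in>A. (\<forall>b\<in>A. B a b = 0) \<longrightarrow> a = 0) \<and>
     \<comment> \<open>representation\<close>
     (\<forall>x. lin_on A (\<rho> x)) \<and> (\<forall>x. \<forall>a\<in>A. \<rho> x a \<in> A) \<and>
     (\<forall>a\<in>A. linear (\<lambda>x. \<rho> x a)) \<and>
     (\<forall>x y. \<forall>a\<in>A. \<rho> (br x y) a = \<rho> x (\<rho> y a) - \<rho> y (\<rho> x a)) \<and>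
     \<comment> \<open>by skew-adjoint maps\<close>
     (\<forall>x. \<forall>a\<in>A. \<forall>b\<in>A. B (\<rho> x a) b = - B a (\<rho> x b))"

definition invariant_sub :: "'m::real_vector set \<Rightarrow> ('l \<Rightarrow> 'm \<Rightarrow> 'm) \<Rightarrow> 'm set \<Rightarrow> bool" where
  "invariant_sub A \<rho> U \<longleftrightarrow> subspace U \<and> U \<subseteq> A \<and> (\<forall>x. \<forall>u\<in>U. \<rho> x u \<in> U)"

text \<open>Semisimple = completely reducible: every submodule has a complementary submodule.\<close>
definition semisimple_module :: "'m::real_vector set \<Rightarrow> ('l \<Rightarrow> 'm \<Rightarrow> 'm) \<Rightarrow> bool" where
  "semisimple_module A \<rho> \<longleftrightarrow>
     (\<forall>U. invariant_sub A \<rho> U \<longrightarrow>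
        (\<exists>W. invariant_sub A \<rho> W \<and> U \<inter> W = {0} \<and> {u + w | u w. u \<in> U \<and> w \<in> W} = A))"

definition invariants :: "'m::real_vector set \<Rightarrow> ('l \<Rightarrow> 'm \<Rightarrow> 'm) \<Rightarrow> 'm set" where
  "invariants A \<rho> = {a \<in> A. \<forall>x. \<rho> x a = 0}"

definition cochain2 :: "'m::real_vector set \<Rightarrow> ('l::real_vector \<Rightarrow> 'l \<Rightarrow> 'm) \<Rightarrow> bool" where
  "cochain2 A \<alpha> \<longleftrightarrow> (\<forall>x y. \<alpha> x y \<in> A) \<and> (\<forall>x. linear (\<alpha> x)) \<and> (\<forall>y. linear (\<lambda>x. \<alpha> x y)) \<and>
     (\<forall>x. \<alpha> x x = 0)"

definition cochain3 :: "('l::real_vector \<Rightarrow> 'l \<Rightarrow> 'l \<Rightarrow> real) \<Rightarrow> bool" where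
  "cochain3 \<gamma> \<longleftrightarrow> (\<forall>x y. linear (\<gamma> x y)) \<and> (\<forall>x z. linear (\<lambda>y. \<gamma> x y z)) \<and>
     (\<forall>y z. linear (\<lambda>x. \<gamma> x y z)) \<and> (\<forall>x z. \<gamma> x x z = 0) \<and> (\<forall>x y. \<gamma> x y y = 0)"

definition d2 :: "('l \<Rightarrow> 'l \<Rightarrow> 'l) \<Rightarrow> ('l \<Rightarrow> 'm \<Rightarrow> 'm::real_vector) \<Rightarrow> ('l \<Rightarrow> 'l \<Rightarrow> 'm) \<Rightarrow> 'l \<Rightarrow> 'l \<Rightarrow> 'l \<Rightarrow> 'm" where
  "d2 br \<rho> \<alpha> x0 x1 x2 =
     \<rho> x0 (\<alpha> x1 x2) - \<rho> x1 (\<alpha> x0 x2) + \<rho> x2 (\<alpha> x0 x1)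
     - \<alpha> (br x0 x1) x2 + \<alpha> (br x0 x2) x1 - \<alpha> (br x1 x2) x0"

definition d3 :: "('l \<Rightarrow> 'l \<Rightarrow> 'l) \<Rightarrow> ('l \<Rightarrow> 'l \<Rightarrow> 'l \<Rightarrow> real) \<Rightarrow> 'l \<Rightarrow> 'l \<Rightarrow> 'l \<Rightarrow> 'l \<Rightarrow> real" where
  "d3 br \<gamma> x0 x1 x2 x3 =
     - \<gamma> (br x0 x1) x2 x3 + \<gamma> (br x0 x2) x1 x3 - \<gamma> (br x0 x3) x1 x2
     - \<gamma> (br x1 x2) x0 x3 + \<gamma> (br x1 x3) x0 x2 - \<gamma> (br x2 x3) x0 x1"

text \<open>One half of the contracted wedge product, 1/2 <alpha \<and> alpha>, with the shuffle convention for \<and>.\<close>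
definition half_wedge :: "('m \<Rightarrow> 'm \<Rightarrow> real) \<Rightarrow> ('l \<Rightarrow> 'l \<Rightarrow> 'm) \<Rightarrow> 'l \<Rightarrow> 'l \<Rightarrow> 'l \<Rightarrow> 'l \<Rightarrow> real" where
  "half_wedge B \<alpha> x0 x1 x2 x3 =
     B (\<alpha> x0 x1) (\<alpha> x2 x3) - B (\<alpha> x0 x2) (\<alpha> x1 x3) + B (\<alpha> x0 x3) (\<alpha> x1 x2)"

definition quad_cocycle ::
  "('l::real_vector \<Rightarrow> 'l \<Rightarrow> 'l) \<Rightarrow> 'm::real_vector set \<Rightarrow> ('l \<Rightarrow> 'm \<Rightarrow> 'm) \<Rightarrow> ('m \<Rightarrow> 'm \<Rightarrow> real)
     \<Rightarrow> ('l \<Rightarrow> 'l \<Rightarrow> 'm) \<Rightarrow> ('l \<Rightarrow> 'l \<Rightarrow> 'l \<Rightarrow> real) \<Rightarrow> bool" where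
  "quad_cocycle br A \<rho> B \<alpha> \<gamma> \<longleftrightarrow> cochain2 A \<alpha> \<and> cochain3 \<gamma> \<and>
     (\<forall>x0 x1 x2. d2 br \<rho> \<alpha> x0 x1 x2 = 0) \<and>
     (\<forall>x0 x1 x2 x3. d3 br \<gamma> x0 x1 x2 x3 = half_wedge B \<alpha> x0 x1 x2 x3)"

definition l_sub :: "('l::real_vector \<Rightarrow> 'l \<Rightarrow> 'l) \<Rightarrow> 'm::real_vector set \<Rightarrow> ('l \<Rightarrow> 'm \<Rightarrow> 'm) \<Rightarrow> nat \<Rightarrow> 'l set" where
  "l_sub br A \<rho> k = (if k = 0 then centre br \<inter> {x. \<forall>a\<in>A. \<rho> x a = 0}
                      else centre br \<inter> lcs br (k + 1))"

definition cond_A ::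
  "('l::real_vector \<Rightarrow> 'l \<Rightarrow> 'l) \<Rightarrow> 'm::real_vector set \<Rightarrow> ('l \<Rightarrow> 'm \<Rightarrow> 'm) \<Rightarrow> ('m \<Rightarrow> 'm \<Rightarrow> real)
     \<Rightarrow> ('l \<Rightarrow> 'l \<Rightarrow> 'm) \<Rightarrow> ('l \<Rightarrow> 'l \<Rightarrow> 'l \<Rightarrow> real) \<Rightarrow> nat \<Rightarrow> bool" where
  "cond_A br A \<rho> B \<alpha> \<gamma> k \<longleftrightarrow>
     (\<forall>L0 \<in> l_sub br A \<rho> k.
        (\<exists>A0\<in>A. \<exists>Z0. lin_on (lcs br (k + 1)) Z0 \<and>
            (\<forall>L. \<alpha> L L0 = 0) \<and>
            (\<forall>L. \<forall>w\<in>lcs br (k + 1). \<gamma> L L0 w = - B A0 (\<alpha> L w) + Z0 (br L w)))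
        \<longrightarrow> L0 = 0)"

text \<open>Image under alpha of the kernel of the bracket map l \<otimes> l^(k+1) \<rightarrow> l
  (elements of the tensor product written as finite sums of pure tensors).\<close>
definition alpha_ker :: "('l::real_vector \<Rightarrow> 'l \<Rightarrow> 'l) \<Rightarrow> ('l \<Rightarrow> 'l \<Rightarrow> 'm::real_vector) \<Rightarrow> nat \<Rightarrow> 'm set" where
  "alpha_ker br \<alpha> k =
     {(\<Sum>i<N. \<alpha> (x i) (y i)) | (N::nat) x y.
        (\<forall>i<N. y i \<in> lcs br (k + 1)) \<and> (\<Sum>i<N. br (x i) (y i)) = 0}"

definition nondeg_sub :: "('m \<Rightarrow> 'm \<Rightarrow> real) \<Rightarrow> 'm::real_vector set \<Rightarrow> bool" where
  "nondeg_sub B W \<longleftrightarrow> (\<forall>w\<in>W. (\<forall>v\<in>W. B w v = 0) \<longrightarrow> w = 0)"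

definition cond_B :: "('l::real_vector \<Rightarrow> 'l \<Rightarrow> 'l) \<Rightarrow> ('m \<Rightarrow> 'm \<Rightarrow> real) \<Rightarrow> ('l \<Rightarrow> 'l \<Rightarrow> 'm::real_vector) \<Rightarrow> nat \<Rightarrow> bool" where
  "cond_B br B \<alpha> k \<longleftrightarrow> nondeg_sub B (alpha_ker br \<alpha> k)"

definition admits_admissible_class ::
  "('l::real_vector \<Rightarrow> 'l \<Rightarrow> 'l) \<Rightarrow> 'm::real_vector set \<Rightarrow> ('l \<Rightarrow> 'm \<Rightarrow> 'm) \<Rightarrow> ('m \<Rightarrow> 'm \<Rightarrow> real) \<Rightarrow> bool" where
  "admits_admissible_class br A \<rho> B \<longleftrightarrow>
     (\<exists>\<alpha> \<gamma>. quad_cocycle br A \<rho> B \<alpha> \<gamma> \<and> (\<forall>x y. \<alpha> x y \<in> invariants A \<rho>) \<and>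
        (\<exists>m. lcs br (m + 2) = {0} \<and>
           (\<forall>k\<le>m. cond_A br A \<rho> B \<alpha> \<gamma> k \<and> cond_B br B \<alpha> k)))"

text \<open>l is admissible: some semisimple orthogonal l-module admits an admissible class.
  The module is realised as a finite-dimensional subspace of the real vector space type 'm.\<close>
definition admissible_lie :: "('l::real_vector \<Rightarrow> 'l \<Rightarrow> 'l) \<Rightarrow> 'm::real_vector itself \<Rightarrow> bool" where
  "admissible_lie br _ \<longleftrightarrow>
     (\<exists>(A::'m set) \<rho> B. orth_module br A \<rho> B \<and> semisimple_module A \<rho> \<and> admits_admissible_class br A \<rho> B)"

end

theory Submission imports Defs begin

lemma bilin_anti:
  fixes f :: "'a::real_vector \<Rightarrow> 'a \<Rightarrow> 'b::real_vector"
  assumes l1: "\<forall>x. linear (f x)" and l2: "\<forall>y. linear (\<lambda>x. f x y)" and al: "\<forall>x. f x x = 0"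
  shows "f x y = - f y x"
proof -
  have "0 = f (x+y) (x+y)" using al by simp
  also have "\<dots> = f x (x+y) + f y (x+y)"
    using linear_add[OF l2[rule_format, of "x+y"]] by simp
  also have "\<dots> = f x x + f x y + f y x + f y y"
    using linear_add[OF l1[rule_format, of x]] linear_add[OF l1[rule_format, of y]] by simp
  finally show ?thesis using al by (simp add: eq_neg_iff_add_eq_0 add.assoc)
qed

lemma span2_coords:
  assumes "w \<in> span {Y, Z}"
  shows "\<exists>s t. w = s *\<^sub>R Y + t *\<^sub>R Z"
proof -
  from assms obtain k where "w - k *\<^sub>R Y \<in> span {Z}"
    using real_vector.span_breakdown_eq by blast
  then obtain t where "w - k *\<^sub>R Y = t *\<^sub>R Z" using real_vector.span_singleton by blast
  then have "w = k *\<^sub>R Y + t *\<^sub>R Z" by (simp add: algebra_simps)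
  then show ?thesis by blast
qed

lemma lcs2_mem: "br x y \<in> lcs br 2"
proof -
  have "br x y \<in> {br x y |x y. y \<in> lcs br (Suc 0)}" by auto
  then show ?thesis unfolding numeral_2_eq_2 lcs.simps by (rule real_vector.span_base)
qed

lemma lcs2_sub: "subspace (lcs br 2)"
  unfolding numeral_2_eq_2 lcs.simps by (rule real_vector.subspace_span)

lemma basis_all:
  assumes sp: "span (X ` {1..n} \<union> {Y, Z}) = UNIV" and S: "subspace S"
    and XS: "\<And>k. 1 \<le> k \<Longrightarrow> k \<le> n \<Longrightarrow> X k \<in> S" and "Y \<in> S" "Z \<in> S"
  shows "x \<in> S"
proof -
  have "X ` {1..n} \<union> {Y, Z} \<subseteq> S" using XS assms(4,5) by auto
  then have "span (X ` {1..n} \<union> {Y, Z}) \<subseteq> S" using real_vector.span_minimal S by blast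
  then show ?thesis using sp by auto
qed

lemma lin_on_add: "lin_on A f \<Longrightarrow> u \<in> A \<Longrightarrow> v \<in> A \<Longrightarrow> f (u + v) = f u + f v"
  unfolding lin_on_def by simp

lemma lin_on_scale: "lin_on A f \<Longrightarrow> u \<in> A \<Longrightarrow> f (c *\<^sub>R u) = c *\<^sub>R f u"
  unfolding lin_on_def by simp

lemma B_sum:
  fixes B :: "'m::real_vector \<Rightarrow> 'm \<Rightarrow> real"
  assumes subA: "subspace A" and lin: "lin_on A (B c)" and fA: "\<forall>i. f i \<in> A"
  shows "B c (\<Sum>i<(N::nat). f i) = (\<Sum>i<N. B c (f i))"
proof (induct N)
  case 0
  have "B c (0 *\<^sub>R 0) = 0 *\<^sub>R B c 0"
    by (rule lin_on_scale[OF lin real_vector.subspace_0[OF subA]])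
  then show ?case by simp
next
  case (Suc N)
  have sA: "(\<Sum>i<N. f i) \<in> A" by (rule real_vector.subspace_sum[OF subA]) (use fA in auto)
  have "B c (\<Sum>i<Suc N. f i) = B c ((\<Sum>i<N. f i) + f N)" by simp
  also have "\<dots> = B c (\<Sum>i<N. f i) + B c (f N)"
    using lin sA fA by (simp add: lin_on_add)
  finally show ?case using Suc by simp
qed

lemma orth_alpha_ker:
  fixes B :: "'m::real_vector \<Rightarrow> 'm \<Rightarrow> real"
  assumes subA: "subspace A" and lin: "lin_on A (B c)"
    and \<alpha>A: "\<forall>x y. \<alpha> x y \<in> A"
    and dec: "\<forall>x w. w \<in> lcs br 2 \<longrightarrow> (\<exists>s t. \<alpha> x w = s *\<^sub>R \<alpha> x Y + t *\<^sub>R \<alpha> x Z)"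
    and op: "\<forall>x. B c (\<alpha> x Y) = 0" and oq: "\<forall>x. B c (\<alpha> x Z) = 0"
  shows "\<forall>v \<in> alpha_ker br \<alpha> 1. B c v = 0"
proof
  fix v assume "v \<in> alpha_ker br \<alpha> 1"
  then obtain N::nat and x y where v: "v = (\<Sum>i<N. \<alpha> (x i) (y i))" and y: "\<forall>i<N. y i \<in> lcs br 2"
    unfolding alpha_ker_def one_add_one by blast
  have "B c v = (\<Sum>i<N. B c (\<alpha> (x i) (y i)))"
    unfolding v by (rule B_sum[of A B c, OF subA lin]) (use \<alpha>A in auto)
  also have "\<dots> = 0"
  proof (rule sum.neutral, rule ballI)
    fix i assume "i \<in> {..<N}"
    then obtain s t where e: "\<alpha> (x i) (y i) = s *\<^sub>R \<alpha> (x i) Y + t *\<^sub>R \<alpha> (x i) Z"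
      using dec y by blast
    have sA: "s *\<^sub>R \<alpha> (x i) Y \<in> A" "t *\<^sub>R \<alpha> (x i) Z \<in> A"
      using \<alpha>A by (simp_all add: real_vector.subspace_scale[OF subA])
    have "B c (\<alpha> (x i) (y i)) = B c (s *\<^sub>R \<alpha> (x i) Y) + B c (t *\<^sub>R \<alpha> (x i) Z)"
      unfolding e using lin sA by (simp add: lin_on_add)
    also have "\<dots> = s * B c (\<alpha> (x i) Y) + t * B c (\<alpha> (x i) Z)"
      using lin \<alpha>A by (simp add: lin_on_scale)
    finally show "B c (\<alpha> (x i) (y i)) = 0" using op oq by simp
  qed
  finally show "B c v = 0" .
qed

theorem lemma8:
  fixes br :: "'l::real_vector \<Rightarrow> 'l \<Rightarrow> 'l"
    and X :: "nat \<Rightarrow> 'l" and Y Z :: 'l and n :: nat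
  assumes lie: "lie_algebra br"
    and nil: "nilpotent_lie br"
    and adm: "admissible_lie br TYPE('m::real_vector)"
    and dim_der: "dim (lcs br 2) = 2"
    and der_central: "lcs br 2 \<subseteq> centre br"
    and n4: "n \<ge> 4"
    and basis_indep: "independent (X ` {1..n} \<union> {Y, Z})"
    and basis_card: "card (X ` {1..n} \<union> {Y, Z}) = n + 2"
    and basis_span: "span (X ` {1..n} \<union> {Y, Z}) = UNIV"
    and b12: "br (X 1) (X 2) = Y"
    and b13: "br (X 1) (X 3) = Z"
    and b23: "br (X 2) (X 3) = 0"
    and b14: "br (X 1) (X 4) = 0"
    and b24: "br (X 2) (X 4) = Z"
    and b1j: "\<forall>j. 5 \<le> j \<and> j \<le> n \<longrightarrow> br (X 1) (X j) = 0 \<and> br (X 2) (X j) = 0"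
  shows "\<forall>j. 5 \<le> j \<and> j \<le> n \<longrightarrow> br (X 3) (X j) = 0"
proof (intro allI impI)
  fix j assume j: "5 \<le> j \<and> j \<le> n"
  show "br (X 3) (X j) = 0"
  proof (rule ccontr)
    assume L0nz: "br (X 3) (X j) \<noteq> 0"
    define L0 where "L0 = br (X 3) (X j)"
    have brl1: "\<forall>x. linear (br x)" and brl2: "\<forall>y. linear (\<lambda>x. br x y)" and bralt: "\<forall>x. br x x = 0"
      using lie unfolding lie_algebra_def by auto
    have branti: "br x y = - br y x" for x y by (rule bilin_anti[OF brl1 brl2 bralt])
    define D where "D = lcs br 2"
    have brD: "br x y \<in> D" for x y unfolding D_def by (rule lcs2_mem)
    have subD: "subspace D" unfolding D_def by (rule lcs2_sub)
    have cen: "br x w = 0" if "w \<in> D" for x w using der_central that unfolding D_def centre_def by auto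
    have cen': "br w x = 0" if "w \<in> D" for x w using cen[OF that, of x] branti[of w x] by simp
    have YD: "Y \<in> D" using brD[of "X 1" "X 2"] b12 by simp
    have ZD: "Z \<in> D" using brD[of "X 1" "X 3"] b13 by simp
    have L0D: "L0 \<in> D" unfolding L0_def by (rule brD)
    have cardX: "card (X ` {1..n}) \<le> n" using card_image_le[of "{1..n}" X] by simp
    have YZ: "Y \<noteq> Z"
    proof
      assume "Y = Z"
      then have "card (X ` {1..n} \<union> {Y, Z}) \<le> card (X ` {1..n}) + card {Y}"
        using card_Un_le[of "X ` {1..n}" "{Y}"] by simp
      then show False using basis_card cardX by simp
    qed
    have indYZ: "independent {Y, Z}" using basis_indep by (rule real_vector.independent_mono) auto
    have Dsub: "D \<subseteq> span {Y, Z}"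
    proof
      fix w assume wD: "w \<in> D"
      obtain Bs where Bs: "Bs \<subseteq> D" "independent Bs" "D \<subseteq> span Bs" "card Bs = dim D"
        using real_vector.basis_exists[of D] by metis
      have cB: "card Bs = 2" using Bs(4) dim_der D_def by simp
      have fB: "finite Bs" using cB by (metis card.infinite zero_neq_numeral)
      show "w \<in> span {Y, Z}"
      proof (rule ccontr)
        assume nw: "w \<notin> span {Y, Z}"
        have wn: "w \<notin> {Y, Z}" using nw real_vector.span_base by blast
        have ind3: "independent (insert w {Y, Z})"
          using nw indYZ wn by (simp add: real_vector.independent_insert)
        have "insert w {Y, Z} \<subseteq> span Bs" using wD YD ZD Bs(3) by auto
        then have "card (insert w {Y, Z}) \<le> card Bs"
          using real_vector.independent_span_bound[OF fB ind3] by simp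
        moreover have "card (insert w {Y, Z}) = 3" using wn YZ by simp
        ultimately show False using cB by simp
      qed
    qed
    have coords: "\<exists>s t. w = s *\<^sub>R Y + t *\<^sub>R Z" if "w \<in> D" for w
      using span2_coords Dsub that by blast
    obtain A \<rho> B where om: "orth_module br (A::'m set) \<rho> B" and aac: "admits_admissible_class br A \<rho> B"
      using adm unfolding admissible_lie_def by blast
    obtain \<alpha> \<gamma> m where qc: "quad_cocycle br A \<rho> B \<alpha> \<gamma>" and inv: "\<forall>x y. \<alpha> x y \<in> invariants A \<rho>"
      and mz: "lcs br (m+2) = {0}" and conds: "\<forall>k\<le>m. cond_A br A \<rho> B \<alpha> \<gamma> k \<and> cond_B br B \<alpha> k"
      using aac unfolding admits_admissible_class_def by blast
    have subA: "subspace A" and Blin: "\<forall>a\<in>A. lin_on A (B a)" and Bsym: "\<forall>a\<in>A. \<forall>b\<in>A. B a b = B b a"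
      using om unfolding orth_module_def by auto
    have \<alpha>A: "\<forall>x y. \<alpha> x y \<in> A" and \<alpha>l1: "\<forall>x. linear (\<alpha> x)" and \<alpha>l2: "\<forall>y. linear (\<lambda>x. \<alpha> x y)"
      and \<alpha>alt: "\<forall>x. \<alpha> x x = 0"
      using qc unfolding quad_cocycle_def cochain2_def by auto
    have \<alpha>A'[simp]: "\<alpha> x y \<in> A" for x y using \<alpha>A by simp
    have \<gamma>l3: "\<forall>x y. linear (\<gamma> x y)" and \<gamma>l2: "\<forall>x z. linear (\<lambda>y. \<gamma> x y z)"
      and \<gamma>l1: "\<forall>y z. linear (\<lambda>x. \<gamma> x y z)"
      and \<gamma>a1: "\<forall>x z. \<gamma> x x z = 0" and \<gamma>a2: "\<forall>x y. \<gamma> x y y = 0"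
      using qc unfolding quad_cocycle_def cochain3_def by auto
    have d\<alpha>: "\<forall>x0 x1 x2. d2 br \<rho> \<alpha> x0 x1 x2 = 0"
      and d\<gamma>: "\<forall>x0 x1 x2 x3. d3 br \<gamma> x0 x1 x2 x3 = half_wedge B \<alpha> x0 x1 x2 x3"
      using qc unfolding quad_cocycle_def by auto
    have \<rho>\<alpha>: "\<rho> x (\<alpha> y z) = 0" for x y z using inv unfolding invariants_def by auto
    have m1: "1 \<le> m"
    proof (rule ccontr)
      assume "\<not> 1 \<le> m" then have "m = 0" by simp
      then have "D = {0}" using mz unfolding D_def by (simp del: lcs.simps add: numeral_2_eq_2)
      then have "Y = 0" using YD by simp
      then show False using indYZ real_vector.dependent_zero by auto
    qed
    have cA1: "cond_A br A \<rho> B \<alpha> \<gamma> 1" and cB1: "cond_B br B \<alpha> 1" using conds m1 by auto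
    have \<alpha>anti: "\<alpha> x y = - \<alpha> y x" for x y by (rule bilin_anti[OF \<alpha>l1 \<alpha>l2 \<alpha>alt])
    have \<alpha>0l[simp]: "\<alpha> 0 y = 0" for y using linear_0[OF \<alpha>l2[rule_format, of y]] by simp
    have \<alpha>0r[simp]: "\<alpha> x 0 = 0" for x using linear_0[OF \<alpha>l1[rule_format, of x]] .
    have \<alpha>linr: "\<alpha> x (s *\<^sub>R u + t *\<^sub>R v) = s *\<^sub>R \<alpha> x u + t *\<^sub>R \<alpha> x v" for x s t u v
      using linear_add[OF \<alpha>l1[rule_format, of x]] linear_scale[OF \<alpha>l1[rule_format, of x]] by simp
    have \<alpha>linl: "\<alpha> (s *\<^sub>R u + t *\<^sub>R v) y = s *\<^sub>R \<alpha> u y + t *\<^sub>R \<alpha> v y" for y s t u v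
      using linear_add[OF \<alpha>l2[rule_format, of y]] linear_scale[OF \<alpha>l2[rule_format, of y]] by simp
    have \<alpha>addl: "\<alpha> (u + v) y = \<alpha> u y + \<alpha> v y" for u v y
      using linear_add[OF \<alpha>l2[rule_format, of y]] by simp
    have \<alpha>scl: "\<alpha> (s *\<^sub>R u) y = s *\<^sub>R \<alpha> u y" for s u y
      using linear_scale[OF \<alpha>l2[rule_format, of y]] by simp
    have \<alpha>negl: "\<alpha> (- u) y = - \<alpha> u y" for u y
      using linear_neg[OF \<alpha>l2[rule_format, of y]] by simp
    have d2': "\<alpha> (br x0 x1) x2 = \<alpha> (br x0 x2) x1 - \<alpha> (br x1 x2) x0" for x0 x1 x2
      using d\<alpha>[rule_format, of x0 x1 x2] unfolding d2_def by (simp add: \<rho>\<alpha> algebra_simps)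
    have \<gamma>12: "\<gamma> x y z = - \<gamma> y x z" for x y z
      using bilin_anti[of "\<lambda>x y. \<gamma> x y z" x y] \<gamma>l2 \<gamma>l1 \<gamma>a1 by auto
    have \<gamma>23: "\<gamma> x y z = - \<gamma> x z y" for x y z
      using bilin_anti[of "\<gamma> x" y z] \<gamma>l3 \<gamma>l2 \<gamma>a2 by auto
    have \<gamma>cyc: "\<gamma> x y z = \<gamma> y z x" for x y z using \<gamma>12[of x y z] \<gamma>23[of y x z] by simp
    have \<gamma>13: "\<gamma> x y z = - \<gamma> z y x" for x y z using \<gamma>cyc[of x y z] \<gamma>12[of y z x] by simp
    have \<gamma>0[simp]: "\<gamma> 0 y z = 0" for y z using linear_0[OF \<gamma>l1[rule_format, of y z]] by simp
    have \<gamma>linl: "\<gamma> (s *\<^sub>R u + t *\<^sub>R v) y z = s * \<gamma> u y z + t * \<gamma> v y z" for y z s t u v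
      using linear_add[OF \<gamma>l1[rule_format, of y z]] linear_scale[OF \<gamma>l1[rule_format, of y z]] by simp
    have \<gamma>linr: "\<gamma> x y (s *\<^sub>R u + t *\<^sub>R v) = s * \<gamma> x y u + t * \<gamma> x y v" for x y s t u v
      using linear_add[OF \<gamma>l3[rule_format, of x y]] linear_scale[OF \<gamma>l3[rule_format, of x y]] by simp
    have \<gamma>scl: "\<gamma> (s *\<^sub>R u) y z = s * \<gamma> u y z" for s u y z
      using linear_scale[OF \<gamma>l1[rule_format, of y z]] by simp
    have \<gamma>addl: "\<gamma> (u + v) y z = \<gamma> u y z + \<gamma> v y z" for u v y z
      using linear_add[OF \<gamma>l1[rule_format, of y z]] by simp
    have Badd: "B c (u + v) = B c u + B c v" if "c \<in> A" "u \<in> A" "v \<in> A" for c u v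
      using lin_on_add[OF Blin[rule_format, OF that(1)] that(2,3)] .
    have Bsc: "B c (s *\<^sub>R u) = s * B c u" if "c \<in> A" "u \<in> A" for c s u
      using lin_on_scale[OF Blin[rule_format, OF that(1)] that(2)] by simp
    have B0r[simp]: "B c 0 = 0" if "c \<in> A" for c
      using Bsc[OF that real_vector.subspace_0[OF subA], of 0] by simp
    have B0l[simp]: "B 0 u = 0" if "u \<in> A" for u
      using Bsym real_vector.subspace_0[OF subA] that B0r[OF that] by metis
    have Bl: "B c (s *\<^sub>R u + t *\<^sub>R v) = s * B c u + t * B c v" if "c \<in> A" "u \<in> A" "v \<in> A" for c s t u v
      using Badd[OF that(1), of "s *\<^sub>R u" "t *\<^sub>R v"] Bsc[OF that(1,2), of s] Bsc[OF that(1,3), of t]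
        real_vector.subspace_scale[OF subA] that by simp
    have Bneg: "B c (- u) = - B c u" if "c \<in> A" "u \<in> A" for c u
      using Bsc[OF that, of "-1"] by simp
    have Bsl: "B (s *\<^sub>R c) u = s * B c u" if "c \<in> A" "u \<in> A" for c s u
      using Bsym Bsc[OF that(2,1), of s] that real_vector.subspace_scale[OF subA] by metis
    have Bs: "B u v = B v u" if "u \<in> A" "v \<in> A" for u v using Bsym that by blast
    have cY[simp]: "br x Y = 0" for x using cen[OF YD] .
    have cZ[simp]: "br x Z = 0" for x using cen[OF ZD] .
    have cL[simp]: "br x L0 = 0" for x using cen[OF L0D] .
    have cY'[simp]: "br Y x = 0" for x using cen'[OF YD] .
    have cZ'[simp]: "br Z x = 0" for x using cen'[OF ZD] .
    have cL'[simp]: "br L0 x = 0" for x using cen'[OF L0D] .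
    have b1k: "br (X 1) (X k) = 0" "br (X 2) (X k) = 0" if "5 \<le> k" "k \<le> n" for k
      using b1j that by auto
    have bj: "br (X 1) (X j) = 0" "br (X 2) (X j) = 0" using b1k j by auto
    obtain a b where Lab: "L0 = a *\<^sub>R Y + b *\<^sub>R Z" using coords[OF L0D] by blast
    obtain a4 b4 where ab4: "br (X 3) (X 4) = a4 *\<^sub>R Y + b4 *\<^sub>R Z" using coords[OF brD] by blast
    have \<alpha>D: "\<exists>s t. \<alpha> x w = s *\<^sub>R \<alpha> x Y + t *\<^sub>R \<alpha> x Z" if "w \<in> D" for x w
      using coords[OF that] \<alpha>linr by blast
    have \<alpha>L: "\<alpha> x L0 = a *\<^sub>R \<alpha> x Y + b *\<^sub>R \<alpha> x Z" for x unfolding Lab by (rule \<alpha>linr)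
    have D0: "\<alpha> Y Z = 0" using d2'[of "X 1" "X 2" Z] b12 by simp
    have D1: "\<alpha> (X 3) Y = \<alpha> (X 2) Z"
      using d2'[of "X 1" "X 2" "X 3"] b12 b13 b23 \<alpha>anti[of Y "X 3"] \<alpha>anti[of Z "X 2"] by simp
    have D2: "\<alpha> (X 4) Y = - \<alpha> (X 1) Z"
      using d2'[of "X 1" "X 2" "X 4"] b12 b14 b24 \<alpha>anti[of Y "X 4"] \<alpha>anti[of Z "X 1"]
      by simp (metis minus_minus)
    have D3: "\<alpha> (X k) Y = 0" if "5 \<le> k" "k \<le> n" for k
      using d2'[of "X 1" "X 2" "X k"] b12 b1k[OF that] \<alpha>anti[of Y "X k"] by simp
    have D4: "\<alpha> (X j) Z = - \<alpha> (X 1) L0"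
      using d2'[of "X 1" "X 3" "X j"] b13 bj \<alpha>anti[of Z "X j"] \<alpha>anti[of L0 "X 1"] unfolding L0_def
      by simp (metis minus_minus)
    have D5: "\<alpha> (X 2) L0 = 0"
      using d2'[of "X 2" "X 3" "X j"] b23 bj \<alpha>anti[of L0 "X 2"] unfolding L0_def by simp
    have D6: "\<alpha> (X 3) Z = a4 *\<^sub>R \<alpha> (X 2) Y + b4 *\<^sub>R \<alpha> (X 2) Z"
    proof -
      have "\<alpha> Z (X 3) = \<alpha> (br (X 3) (X 4)) (X 2)" using d2'[of "X 2" "X 3" "X 4"] b23 b24 by simp
      then have "- \<alpha> (X 3) Z = - \<alpha> (X 2) (br (X 3) (X 4))"
        using \<alpha>anti[of Z "X 3"] \<alpha>anti[of "br (X 3) (X 4)" "X 2"] by simp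
      then have "\<alpha> (X 3) Z = \<alpha> (X 2) (br (X 3) (X 4))" by (metis minus_minus)
      then show ?thesis unfolding ab4 \<alpha>linr by simp
    qed
    have D7: "\<alpha> (X 4) Z = - (a4 *\<^sub>R \<alpha> (X 1) Y + b4 *\<^sub>R \<alpha> (X 1) Z)"
    proof -
      have "\<alpha> Z (X 4) = - \<alpha> (br (X 3) (X 4)) (X 1)" using d2'[of "X 1" "X 3" "X 4"] b13 b14 by simp
      then have "- \<alpha> (X 4) Z = \<alpha> (X 1) (br (X 3) (X 4))"
        using \<alpha>anti[of Z "X 4"] \<alpha>anti[of "br (X 3) (X 4)" "X 1"] by simp
      then have "\<alpha> (X 4) Z = - \<alpha> (X 1) (br (X 3) (X 4))" by (metis minus_minus)
      then show ?thesis unfolding ab4 \<alpha>linr by simp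
    qed
    have D8: "\<exists>s t. \<alpha> (X k) Z = - (s *\<^sub>R \<alpha> (X 1) Y + t *\<^sub>R \<alpha> (X 1) Z)" if "5 \<le> k" "k \<le> n" for k
    proof -
      obtain s t where st: "br (X 3) (X k) = s *\<^sub>R Y + t *\<^sub>R Z" using coords[OF brD] by blast
      have "\<alpha> Z (X k) = - \<alpha> (br (X 3) (X k)) (X 1)" using d2'[of "X 1" "X 3" "X k"] b13 b1k[OF that] by simp
      then have "- \<alpha> (X k) Z = \<alpha> (X 1) (br (X 3) (X k))"
        using \<alpha>anti[of Z "X k"] \<alpha>anti[of "br (X 3) (X k)" "X 1"] by simp
      then have "\<alpha> (X k) Z = - \<alpha> (X 1) (br (X 3) (X k))" by (metis minus_minus)
      then have "\<alpha> (X k) Z = - (s *\<^sub>R \<alpha> (X 1) Y + t *\<^sub>R \<alpha> (X 1) Z)" unfolding st \<alpha>linr by simp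
      then show ?thesis by blast
    qed
    have E5: "B (\<alpha> x Y) (\<alpha> y Z) = B (\<alpha> x Z) (\<alpha> y Y)" for x y
    proof -
      obtain s t where st: "br x y = s *\<^sub>R Y + t *\<^sub>R Z" using coords[OF brD] by blast
      have g0: "\<gamma> (br x y) Y Z = 0" unfolding st \<gamma>linl
        using \<gamma>a1 \<gamma>cyc[of Z Y Z] \<gamma>a2 by simp
      show ?thesis using d\<gamma>[rule_format, of x y Y Z] unfolding d3_def half_wedge_def
        using g0 D0 by simp
    qed
    have E5r1: "B (\<alpha> x Y) (\<alpha> y L0) = B (\<alpha> y Y) (\<alpha> x L0)" for x y
      unfolding \<alpha>L using Bl E5[of x y] Bs[of "\<alpha> x Y" "\<alpha> y Y"] Bs[of "\<alpha> y Y" "\<alpha> x Z"] by simp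
    have E5r2: "B (\<alpha> x Z) (\<alpha> y L0) = B (\<alpha> y Z) (\<alpha> x L0)" for x y
      unfolding \<alpha>L using Bl E5[of y x] Bs[of "\<alpha> x Z" "\<alpha> y Y"] Bs[of "\<alpha> y Z" "\<alpha> x Z"] by simp
    have spanB: "span (X ` {1..n} \<union> {Y, Z}) = UNIV" by (rule basis_span)
    have qp: "\<exists>x'. \<alpha> x Z = \<alpha> x' Y" for x
    proof -
      have "x \<in> {x. \<exists>x'. \<alpha> x Z = \<alpha> x' Y}"
      proof (rule basis_all[OF spanB])
        show "subspace {x. \<exists>x'. \<alpha> x Z = \<alpha> x' Y}"
          unfolding real_vector.subspace_def
        proof (intro conjI allI ballI)
          show "0 \<in> {x. \<exists>x'. \<alpha> x Z = \<alpha> x' Y}" by (auto intro: exI[of _ 0])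
        next
          fix u v assume "u \<in> {x. \<exists>x'. \<alpha> x Z = \<alpha> x' Y}" "v \<in> {x. \<exists>x'. \<alpha> x Z = \<alpha> x' Y}"
          then obtain u' v' where "\<alpha> u Z = \<alpha> u' Y" "\<alpha> v Z = \<alpha> v' Y" by blast
          then have "\<alpha> (u + v) Z = \<alpha> (u' + v') Y" by (simp add: \<alpha>addl)
          then show "u + v \<in> {x. \<exists>x'. \<alpha> x Z = \<alpha> x' Y}" by blast
        next
          fix c u assume "u \<in> {x. \<exists>x'. \<alpha> x Z = \<alpha> x' Y}"
          then obtain u' where "\<alpha> u Z = \<alpha> u' Y" by blast
          then have "\<alpha> (c *\<^sub>R u) Z = \<alpha> (c *\<^sub>R u') Y" by (simp add: \<alpha>scl)
          then show "c *\<^sub>R u \<in> {x. \<exists>x'. \<alpha> x Z = \<alpha> x' Y}" by blast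
        qed
      next
        fix k assume k: "1 \<le> k" "k \<le> n"
        have "\<exists>x'. \<alpha> (X k) Z = \<alpha> x' Y"
        proof (cases "k \<ge> 5")
          case True
          then obtain s t where st: "\<alpha> (X k) Z = - (s *\<^sub>R \<alpha> (X 1) Y + t *\<^sub>R \<alpha> (X 1) Z)"
            using D8 k by blast
          have "\<alpha> ((-s) *\<^sub>R X 1 + t *\<^sub>R X 4) Y = \<alpha> (X k) Z"
            unfolding \<alpha>linl st D2 by simp
          then show ?thesis by (intro exI[of _ "(-s) *\<^sub>R X 1 + t *\<^sub>R X 4"]) simp
        next
          case False
          then consider "k = 1" | "k = 2" | "k = 3" | "k = 4" using k by linarith
          then show ?thesis
          proof cases
            case 1
            have "\<alpha> (- X 4) Y = \<alpha> (X 1) Z" using D2 \<alpha>negl by simp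
            then show ?thesis unfolding 1 by (intro exI[of _ "- X 4"]) simp
          next
            case 2
            show ?thesis unfolding 2 by (intro exI[of _ "X 3"]) (simp add: D1)
          next
            case 3
            have "\<alpha> (a4 *\<^sub>R X 2 + b4 *\<^sub>R X 3) Y = \<alpha> (X 3) Z" unfolding \<alpha>linl D6 D1 ..
            then show ?thesis unfolding 3 by (intro exI[of _ "a4 *\<^sub>R X 2 + b4 *\<^sub>R X 3"]) simp
          next
            case 4
            have "\<alpha> ((-a4) *\<^sub>R X 1 + b4 *\<^sub>R X 4) Y = \<alpha> (X 4) Z" unfolding \<alpha>linl D7 D2 by simp
            then show ?thesis unfolding 4 by (intro exI[of _ "(-a4) *\<^sub>R X 1 + b4 *\<^sub>R X 4"]) simp
          qed
        qed
        then show "X k \<in> {x. \<exists>x'. \<alpha> x Z = \<alpha> x' Y}" by simp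
      next
        show "Y \<in> {x. \<exists>x'. \<alpha> x Z = \<alpha> x' Y}" using D0 by (auto intro: exI[of _ 0])
      next
        show "Z \<in> {x. \<exists>x'. \<alpha> x Z = \<alpha> x' Y}" using \<alpha>alt by (auto intro: exI[of _ 0])
      qed
      then show ?thesis by simp
    qed
    have \<alpha>D2: "\<forall>x w. w \<in> lcs br 2 \<longrightarrow> (\<exists>s t. \<alpha> x w = s *\<^sub>R \<alpha> x Y + t *\<^sub>R \<alpha> x Z)"
      unfolding D_def[symmetric] using \<alpha>D by simp
    have killer: "c = 0" if cA: "c \<in> alpha_ker br \<alpha> 1" and c1: "c \<in> A"
      and op: "\<forall>x. B c (\<alpha> x Y) = 0" for c
    proof -
      have oq: "\<forall>x. B c (\<alpha> x Z) = 0"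
      proof
        fix x obtain x' where "\<alpha> x Z = \<alpha> x' Y" using qp by blast
        then show "B c (\<alpha> x Z) = 0" using op by simp
      qed
      have "\<forall>v \<in> alpha_ker br \<alpha> 1. B c v = 0"
        by (rule orth_alpha_ker[of A B c, OF subA Blin[rule_format, OF c1] \<alpha>A \<alpha>D2 op oq])
      moreover have "\<forall>w\<in>alpha_ker br \<alpha> 1. (\<forall>v\<in>alpha_ker br \<alpha> 1. B w v = 0) \<longrightarrow> w = 0"
        using cB1 unfolding cond_B_def nondeg_sub_def .
      ultimately show ?thesis using cA by simp
    qed
    have inker: "\<alpha> x w \<in> alpha_ker br \<alpha> 1" if "w \<in> D" for x w
    proof -
      have "\<alpha> x w = (\<Sum>i<(1::nat). \<alpha> ((\<lambda>_. x) i) ((\<lambda>_. w) i))" by simp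
      moreover have "\<forall>i<(1::nat). (\<lambda>_. w) i \<in> lcs br (1 + 1)" using that D_def by (simp del: lcs.simps add: one_add_one numeral_2_eq_2)
      moreover have "(\<Sum>i<(1::nat). br ((\<lambda>_. x) i) ((\<lambda>_. w) i)) = 0" using cen[OF that] by simp
      ultimately show ?thesis unfolding alpha_ker_def
        by (intro CollectI exI[of _ "1::nat"] exI[of _ "\<lambda>_. x"] exI[of _ "\<lambda>_. w"]) simp
    qed
    have qj0: "\<alpha> (X j) Z = 0"
    proof (rule killer[OF inker[OF ZD]])
      show "\<forall>x. B (\<alpha> (X j) Z) (\<alpha> x Y) = 0"
      proof
        fix x
        have "B (\<alpha> x Y) (\<alpha> (X j) Z) = 0" using E5[of x "X j"] D3[of j] j by simp
        then show "B (\<alpha> (X j) Z) (\<alpha> x Y) = 0" using Bs[of "\<alpha> (X j) Z" "\<alpha> x Y"] by simp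
      qed
    qed simp
    have r1: "\<alpha> (X 1) L0 = 0" using D4 qj0 by simp
    have r2: "\<alpha> (X 2) L0 = 0" by (rule D5)
    have rall: "\<alpha> y L0 = 0" for y
    proof (rule killer[OF inker[OF L0D]])
      show "\<forall>x. B (\<alpha> y L0) (\<alpha> x Y) = 0"
      proof
        fix x
        have "x \<in> {x. B (\<alpha> y L0) (\<alpha> x Y) = 0}"
        proof (rule basis_all[OF spanB])
          show "subspace {x. B (\<alpha> y L0) (\<alpha> x Y) = 0}"
            unfolding real_vector.subspace_def
          proof (intro conjI allI ballI)
            show "0 \<in> {x. B (\<alpha> y L0) (\<alpha> x Y) = 0}" by simp
          next
            fix u v assume "u \<in> {x. B (\<alpha> y L0) (\<alpha> x Y) = 0}" "v \<in> {x. B (\<alpha> y L0) (\<alpha> x Y) = 0}"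
            then show "u + v \<in> {x. B (\<alpha> y L0) (\<alpha> x Y) = 0}"
              using Badd[of "\<alpha> y L0" "\<alpha> u Y" "\<alpha> v Y"] by (simp add: \<alpha>addl)
          next
            fix c u assume "u \<in> {x. B (\<alpha> y L0) (\<alpha> x Y) = 0}"
            then show "c *\<^sub>R u \<in> {x. B (\<alpha> y L0) (\<alpha> x Y) = 0}"
              using Bsc[of "\<alpha> y L0" "\<alpha> u Y" c] by (simp add: \<alpha>scl)
          qed
        next
          fix k assume k: "1 \<le> k" "k \<le> n"
          have h1: "B (\<alpha> y L0) (\<alpha> (X 1) Y) = 0" using E5r1[of "X 1" y] r1 Bs[of "\<alpha> y L0" "\<alpha> (X 1) Y"] by simp
          have h2: "B (\<alpha> y L0) (\<alpha> (X 2) Y) = 0" using E5r1[of "X 2" y] r2 Bs[of "\<alpha> y L0" "\<alpha> (X 2) Y"] by simp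
          have h3: "B (\<alpha> y L0) (\<alpha> (X 3) Y) = 0" using E5r2[of "X 2" y] r2 Bs[of "\<alpha> y L0" "\<alpha> (X 2) Z"] D1 by simp
          have h4: "B (\<alpha> y L0) (\<alpha> (X 4) Y) = 0" using E5r2[of "X 1" y] r1 Bs[of "\<alpha> y L0" "\<alpha> (X 1) Z"] D2 Bneg[of "\<alpha> y L0" "\<alpha> (X 1) Z"] by simp
          show "X k \<in> {x. B (\<alpha> y L0) (\<alpha> x Y) = 0}"
          proof (cases "k \<ge> 5")
            case True then show ?thesis using D3 k by simp
          next
            case False
            then consider "k = 1" | "k = 2" | "k = 3" | "k = 4" using k by linarith
            then show ?thesis using h1 h2 h3 h4 by cases simp_all
          qed
        next
          show "Y \<in> {x. B (\<alpha> y L0) (\<alpha> x Y) = 0}" using \<alpha>alt by simp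
        next
          show "Z \<in> {x. B (\<alpha> y L0) (\<alpha> x Y) = 0}" using \<alpha>anti[of Z Y] D0 by simp
        qed
        then show "B (\<alpha> y L0) (\<alpha> x Y) = 0" by simp
      qed
    qed simp
    have useA: "M = 0" if MD: "M \<in> D" and A0A: "A0 \<in> A" and aM: "\<forall>L. \<alpha> L M = 0"
      and gM: "\<forall>L. \<forall>w\<in>D. \<gamma> L M w = - B A0 (\<alpha> L w)" for M A0
    proof -
      have MD2: "M \<in> lcs br 2" using MD D_def by simp
      have Mc: "M \<in> l_sub br A \<rho> 1" unfolding l_sub_def
        using MD2 der_central by (auto simp del: lcs.simps simp add: one_add_one numeral_2_eq_2)
      have lin0: "lin_on (lcs br (1+1)) (\<lambda>_. 0::real)" unfolding lin_on_def by simp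
      have gM': "\<forall>L. \<forall>w\<in>lcs br (1+1). \<gamma> L M w = - B A0 (\<alpha> L w) + (\<lambda>_. 0::real) (br L w)"
        using gM unfolding D_def by (simp del: lcs.simps add: one_add_one numeral_2_eq_2)
      have "\<exists>A0\<in>A. \<exists>Z0. lin_on (lcs br (1 + 1)) Z0 \<and> (\<forall>L. \<alpha> L M = 0) \<and>
              (\<forall>L. \<forall>w\<in>lcs br (1 + 1). \<gamma> L M w = - B A0 (\<alpha> L w) + Z0 (br L w))"
        using A0A lin0 aM gM' by blast
      then show "M = 0" using cA1 Mc unfolding cond_A_def by blast
    qed
    show False
    proof (cases "b = 0")
      case False
      define U where "U = a *\<^sub>R X 2 + b *\<^sub>R X 3"
      have pU: "\<alpha> U Y = 0"
      proof -
        have "\<alpha> U Y = a *\<^sub>R \<alpha> (X 2) Y + b *\<^sub>R \<alpha> (X 2) Z" unfolding U_def \<alpha>linl D1 ..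
        also have "\<dots> = \<alpha> (X 2) L0" using \<alpha>L[of "X 2"] by simp
        finally show ?thesis using r2 by simp
      qed
      have brjU: "br (X j) U = - b *\<^sub>R L0"
      proof -
        have "br (X j) U = a *\<^sub>R br (X j) (X 2) + b *\<^sub>R br (X j) (X 3)"
          unfolding U_def using linear_add[OF brl1[rule_format, of "X j"]]
            linear_scale[OF brl1[rule_format, of "X j"]] by simp
        also have "\<dots> = - b *\<^sub>R L0" using branti[of "X j" "X 2"] branti[of "X j" "X 3"] bj
          unfolding L0_def by simp
        finally show ?thesis .
      qed
      have Gj: "\<gamma> (X j) L0 Y = 0"
      proof -
        have "\<gamma> Y (X j) L0 = 0" using d\<gamma>[rule_format, of "X 1" "X 2" "X j" L0] b12 bj rall
          unfolding d3_def half_wedge_def by simp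
        then show ?thesis using \<gamma>cyc[of Y "X j" L0] by simp
      qed
      have GU: "\<gamma> U L0 Y = 0"
      proof -
        have e: "\<gamma> Y (X 3) L0 = \<gamma> Z (X 2) L0"
          using d\<gamma>[rule_format, of "X 1" "X 2" "X 3" L0] b12 b13 b23 rall
          unfolding d3_def half_wedge_def by simp
        have "\<gamma> U L0 Y = a * \<gamma> (X 2) L0 Y + b * \<gamma> (X 3) L0 Y" unfolding U_def \<gamma>linl ..
        also have "\<dots> = a * \<gamma> Y (X 2) L0 + b * \<gamma> Y (X 3) L0"
          using \<gamma>cyc[of Y "X 2" L0] \<gamma>cyc[of Y "X 3" L0] by simp
        also have "\<dots> = a * \<gamma> Y (X 2) L0 + b * \<gamma> Z (X 2) L0" using e by simp
        also have "\<dots> = \<gamma> L0 (X 2) L0" unfolding Lab \<gamma>linl ..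
        also have "\<dots> = 0" using \<gamma>cyc[of L0 "X 2" L0] \<gamma>a2 by simp
        finally show ?thesis .
      qed
      have \<gamma>D: "\<gamma> w x Y = 0" if wDD: "w \<in> D" and hx: "\<gamma> x L0 Y = 0" for w x
      proof -
        obtain s t where st: "w = s *\<^sub>R Y + t *\<^sub>R Z" using coords[OF wDD] by blast
        have "\<gamma> L0 x Y = a * \<gamma> Y x Y + b * \<gamma> Z x Y" unfolding Lab \<gamma>linl ..
        moreover have yy: "\<gamma> Y x Y = 0" using \<gamma>cyc[of Y x Y] \<gamma>a2 by simp
        moreover have "\<gamma> L0 x Y = 0" using \<gamma>12[of L0 x Y] hx by simp
        ultimately have "\<gamma> Z x Y = 0" using False by simp
        then show ?thesis unfolding st \<gamma>linl using yy by simp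
      qed
      have mainb: "b * \<gamma> L0 L Y = B (\<alpha> (X j) U) (\<alpha> L Y)" for L
      proof -
        have w1: "\<gamma> (br (X j) L) U Y = 0" by (rule \<gamma>D[OF brD GU])
        have w2: "\<gamma> (br U L) (X j) Y = 0" by (rule \<gamma>D[OF brD Gj])
        have w3: "\<gamma> (br (X j) U) L Y = - b * \<gamma> L0 L Y" unfolding brjU using \<gamma>scl[of "-b" L0 L Y] by simp
        have pj: "\<alpha> (X j) Y = 0" using D3[of j] j by simp
        show ?thesis using d\<gamma>[rule_format, of "X j" U L Y] w1 w2 w3 pU pj
          unfolding d3_def half_wedge_def by simp
      qed
      define A0 where "A0 = (1/b) *\<^sub>R \<alpha> (X j) U"
      have A0A: "A0 \<in> A" unfolding A0_def by (simp add: real_vector.subspace_scale[OF subA])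
      have GL: "\<gamma> L L0 Y = - B A0 (\<alpha> L Y)" for L
      proof -
        have "B A0 (\<alpha> L Y) = (1/b) * B (\<alpha> (X j) U) (\<alpha> L Y)" unfolding A0_def by (rule Bsl) simp_all
        also have "\<dots> = (1/b) * (b * \<gamma> L0 L Y)" using mainb[of L] by simp
        also have "\<dots> = \<gamma> L0 L Y" using False by simp
        also have "\<dots> = - \<gamma> L L0 Y" using \<gamma>12[of L0 L Y] .
        finally show ?thesis by simp
      qed
      have "L0 = 0"
      proof (rule useA[OF L0D A0A])
        show "\<forall>L. \<alpha> L L0 = 0" using rall by simp
        show "\<forall>L. \<forall>w\<in>D. \<gamma> L L0 w = - B A0 (\<alpha> L w)"
        proof (intro allI ballI)
          fix L w assume wD: "w \<in> D"
          obtain s t where st: "w = s *\<^sub>R Y + t *\<^sub>R Z" using coords[OF wD] by blast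
          have "\<gamma> L L0 (a *\<^sub>R Y + b *\<^sub>R Z) = 0" using \<gamma>a2 by (simp add: Lab[symmetric])
          then have gz: "a * \<gamma> L L0 Y + b * \<gamma> L L0 Z = 0" unfolding \<gamma>linr .
          have gZ: "\<gamma> L L0 Z = (-(a/b)) * \<gamma> L L0 Y" using gz False by (simp add: field_simps)
          have "\<alpha> L (a *\<^sub>R Y + b *\<^sub>R Z) = 0" using rall by (simp add: Lab[symmetric])
          then have "a *\<^sub>R \<alpha> L Y + b *\<^sub>R \<alpha> L Z = 0" unfolding \<alpha>linr .
          then have "b *\<^sub>R \<alpha> L Z = (- a) *\<^sub>R \<alpha> L Y" by (simp add: eq_neg_iff_add_eq_0 add.commute)
          then have "(1/b) *\<^sub>R (b *\<^sub>R \<alpha> L Z) = (1/b) *\<^sub>R ((- a) *\<^sub>R \<alpha> L Y)" by simp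
          then have qL: "\<alpha> L Z = (-(a/b)) *\<^sub>R \<alpha> L Y" using False by simp
          have e: "\<alpha> L w = (s - t*(a/b)) *\<^sub>R \<alpha> L Y" unfolding st \<alpha>linr qL by (simp add: algebra_simps)
          have "\<gamma> L L0 w = s * \<gamma> L L0 Y + t * \<gamma> L L0 Z" unfolding st \<gamma>linr ..
          also have "\<dots> = (s - t*(a/b)) * \<gamma> L L0 Y" using gZ by (simp add: algebra_simps)
          also have "\<dots> = - ((s - t*(a/b)) * B A0 (\<alpha> L Y))" using GL[of L] by simp
          also have "\<dots> = - B A0 ((s - t*(a/b)) *\<^sub>R \<alpha> L Y)" using Bsc[OF A0A, of "\<alpha> L Y" "s - t*(a/b)"] by simp
          also have "\<dots> = - B A0 (\<alpha> L w)" using e by simp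
          finally show "\<gamma> L L0 w = - B A0 (\<alpha> L w)" .
        qed
      qed
      then show False using L0nz L0_def by simp
    next
      case True
      have a0: "a \<noteq> 0" using L0nz Lab True L0_def by auto
      have pz: "\<alpha> x Y = 0" for x using rall[of x] \<alpha>L[of x] True a0 by simp
      have q1: "\<alpha> (X 1) Z = 0" using D2 pz[of "X 4"] by simp
      have q2: "\<alpha> (X 2) Z = 0" using D1 pz[of "X 3"] by simp
      have g2: "\<gamma> Z (X 2) Y = 0"
        using d\<gamma>[rule_format, of "X 1" "X 2" "X 3" Y] b12 b13 b23 pz \<gamma>cyc[of Y "X 3" Y] \<gamma>a2
        unfolding d3_def half_wedge_def by simp
      have g1: "\<gamma> Z (X 1) Y = 0"
        using d\<gamma>[rule_format, of "X 1" "X 2" "X 4" Y] b12 b14 b24 pz \<gamma>cyc[of Y "X 4" Y] \<gamma>a2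
        unfolding d3_def half_wedge_def by simp
      have \<gamma>D0: "\<gamma> w x Z = 0" if wDD: "w \<in> D" and hx: "\<gamma> Z x Y = 0" for w x
      proof -
        obtain s t where st: "w = s *\<^sub>R Y + t *\<^sub>R Z" using coords[OF wDD] by blast
        have "\<gamma> Y x Z = 0" using \<gamma>13[of Y x Z] hx by simp
        moreover have "\<gamma> Z x Z = 0" using \<gamma>cyc[of Z x Z] \<gamma>a2 by simp
        ultimately show ?thesis unfolding st \<gamma>linl by simp
      qed
      have mainc: "- \<gamma> Y L Z = B (\<alpha> (X 1) (X 2)) (\<alpha> L Z)" for L
      proof -
        have w1: "\<gamma> (br (X 1) L) (X 2) Z = 0" by (rule \<gamma>D0[OF brD g2])
        have w2: "\<gamma> (br (X 2) L) (X 1) Z = 0" by (rule \<gamma>D0[OF brD g1])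
        show ?thesis using d\<gamma>[rule_format, of "X 1" "X 2" L Z] b12 w1 w2 q1 q2
          unfolding d3_def half_wedge_def by simp
      qed
      define A0 where "A0 = - \<alpha> (X 1) (X 2)"
      have A0A: "A0 \<in> A" using real_vector.subspace_neg[OF subA] by (simp add: A0_def)
      have "Y = 0"
      proof (rule useA[OF YD A0A])
        show "\<forall>L. \<alpha> L Y = 0" using pz by simp
        show "\<forall>L. \<forall>w\<in>D. \<gamma> L Y w = - B A0 (\<alpha> L w)"
        proof (intro allI ballI)
          fix L w assume wD: "w \<in> D"
          obtain s t where st: "w = s *\<^sub>R Y + t *\<^sub>R Z" using coords[OF wD] by blast
          have "\<gamma> L Y w = s * \<gamma> L Y Y + t * \<gamma> L Y Z" unfolding st \<gamma>linr ..
          also have "\<dots> = t * \<gamma> L Y Z" using \<gamma>a2 by simp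
          also have "\<dots> = t * B (\<alpha> (X 1) (X 2)) (\<alpha> L Z)" using mainc[of L] \<gamma>12[of L Y Z] by simp
          finally have l: "\<gamma> L Y w = t * B (\<alpha> (X 1) (X 2)) (\<alpha> L Z)" .
          have "B A0 (\<alpha> L w) = B A0 (t *\<^sub>R \<alpha> L Z)" unfolding st \<alpha>linr using pz by simp
          also have "\<dots> = t * B A0 (\<alpha> L Z)" using Bsc[OF A0A, of "\<alpha> L Z" t] by simp
          also have "\<dots> = t * (- B (\<alpha> (X 1) (X 2)) (\<alpha> L Z))"
            unfolding A0_def using Bsl[of "\<alpha> (X 1) (X 2)" "\<alpha> L Z" "-1"] by simp
          finally show "\<gamma> L Y w = - B A0 (\<alpha> L w)" using l by simp
        qed
      qed
      then show False using indYZ real_vector.dependent_zero by auto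
    qed
  qed
qed
end
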